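(* Let $\hat G$ be a multigraph, let $f\in E(\hat G)$ be an edge with endpoints $u,v$, and let $G=\hat G\setminus f$ be the graph on the same node set with $f$ removed. Identify $\mathcal C_G$ with $\mathcal C_{\hat G}\cap\{x: x_f=0\}$. Let $\psi$ be a height function inducing a good triangulation $\mathcal T_{\hat G}$ of $\mathcal C_{\hat G}$, and let $\mathcal T_G$ be the triangulation of $\mathcal C_G$ induced by the restriction of $\psi$ to the lattice points of $\mathcal C_G$. Then for a set $S$ of lattice points of $\mathcal C_G$ the following are equivalent: (1) $S$ is a simplex of $\mathcal T_G$; (2) $S\cup\{\widetilde e_f\}$ is a simplex of $\mathcal T_{\hat G}$; (3) at least one of $S\cup\{e_f\}$, $S\cup\{\overrightarrow e_f\}$, $S\cup\{\overleftarrow e_f\}$ is a simplex of $\mathcal T_{\hat G}$.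
   Context: For a finite undirected multigraph $G=(V,E)$ (loops, parallel edges and isolated nodes allowed) with $n=|V|$, $m=|E|$, work in $\mathbb{R}^V\times\mathbb{R}^E\cong\mathbb{R}^{n+m}$ with standard basis vectors $e_u$ ($u\in V$), $e_f$ ($f\in E$). Fix for each edge $f$ an ordering $(u,v)$ of its endpoints ($u=v$ for a loop) and set $\widetilde e_f=e_u+e_v-e_f$, $\overleftarrow e_f=e_u-e_v+e_f$, $\overrightarrow e_f=-e_u+e_v+e_f$ (so for a loop $\overleftarrow e_f=\overrightarrow e_f=e_f$). The cosmological polytope $\mathcal C_G$ is the convex hull of $\{e_f,\widetilde e_f,\overleftarrow e_f,\overrightarrow e_f: f\in E\}\cup\{e_u: u\in V\}$; these are exactly its lattice points, and it is an $(n+m-1)$-dimensional polytope in the hyperplane $\sum_i x_i=1$. A good triangulation of $\mathcal C_G$ is a regular triangulation (induced by a height function $\psi$ on the lattice points of $\mathcal C_G$) whose vertex set is the set of all lattice points of $\mathcal C_G$ and which contains the standard simplex $\mathrm{conv}\{e_u,e_f: u\in V, f\in E\}$ as a maximal cell; simplices of a triangulation are identified with their vertex sets. *)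

theory Defs
  imports "HOL-Analysis.Analysis"
begin

text \<open>Ambient space: R^V x R^E, realised as real^('v + 'e) for finite types 'v, 'e.
  A multigraph is given by a node set V, an edge set E and, for every edge,
  the fixed ordered pair (u,v) of its endpoints (u = v for a loop).\<close>

definition multigraph :: "'v set \<Rightarrow> 'e set \<Rightarrow> ('e \<Rightarrow> 'v \<times> 'v) \<Rightarrow> bool" where
  "multigraph V E ends \<longleftrightarrow> finite V \<and> finite E \<and>
     (\<forall>g\<in>E. fst (ends g) \<in> V \<and> snd (ends g) \<in> V)"

definition ev :: "'v \<Rightarrow> real^('v::finite + 'e::finite)" where
  "ev u = axis (Inl u) 1"

definition ee :: "'e \<Rightarrow> real^('v::finite + 'e::finite)" where
  "ee g = axis (Inr g) 1"

definition et :: "('e \<Rightarrow> 'v \<times> 'v) \<Rightarrow> 'e \<Rightarrow> real^('v::finite + 'e::finite)" where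
  "et ends g = ev (fst (ends g)) + ev (snd (ends g)) - ee g"

definition el :: "('e \<Rightarrow> 'v \<times> 'v) \<Rightarrow> 'e \<Rightarrow> real^('v::finite + 'e::finite)" where
  "el ends g = ev (fst (ends g)) - ev (snd (ends g)) + ee g"

definition er :: "('e \<Rightarrow> 'v \<times> 'v) \<Rightarrow> 'e \<Rightarrow> real^('v::finite + 'e::finite)" where
  "er ends g = - ev (fst (ends g)) + ev (snd (ends g)) + ee g"

text \<open>The lattice points of the cosmological polytope C_G (which are exactly the
  listed generating points).  For a subset E' of edges, these points live in the same
  ambient space, with all coordinates of edges outside E' equal to zero.\<close>
definition cosmo_points :: "'v set \<Rightarrow> 'e set \<Rightarrow> ('e \<Rightarrow> 'v \<times> 'v) \<Rightarrow> (real^('v::finite + 'e::finite)) set" where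
  "cosmo_points V E ends =
     ev ` V \<union> ee ` E \<union> et ends ` E \<union> el ends ` E \<union> er ends ` E"

definition cosmo_polytope :: "'v set \<Rightarrow> 'e set \<Rightarrow> ('e \<Rightarrow> 'v \<times> 'v) \<Rightarrow> (real^('v::finite + 'e::finite)) set" where
  "cosmo_polytope V E ends = convex hull (cosmo_points V E ends)"

definition std_simplex :: "'v set \<Rightarrow> 'e set \<Rightarrow> (real^('v::finite + 'e::finite)) set" where
  "std_simplex V E = ev ` V \<union> ee ` E"

text \<open>Cells (faces) of the regular subdivision of the point configuration A induced by
  the height function psi: vertex sets of lower faces of the lifted configuration,
  i.e. the points of A where some affine function below psi on A attains psi.\<close>
definition reg_cell :: "('a::euclidean_space \<Rightarrow> real) \<Rightarrow> 'a set \<Rightarrow> 'a set \<Rightarrow> bool" where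
  "reg_cell \<psi> A C \<longleftrightarrow> C \<subseteq> A \<and>
     (\<exists>w b. (\<forall>a\<in>A. w \<bullet> a + b \<le> \<psi> a) \<and> C = {a\<in>A. w \<bullet> a + b = \<psi> a})"

definition induces_triangulation :: "('a::euclidean_space \<Rightarrow> real) \<Rightarrow> 'a set \<Rightarrow> bool" where
  "induces_triangulation \<psi> A \<longleftrightarrow> (\<forall>C. reg_cell \<psi> A C \<longrightarrow> \<not> affine_dependent C)"

definition tri_simplex :: "('a::euclidean_space \<Rightarrow> real) \<Rightarrow> 'a set \<Rightarrow> 'a set \<Rightarrow> bool" where
  "tri_simplex \<psi> A S \<longleftrightarrow> (\<exists>C. reg_cell \<psi> A C \<and> S \<subseteq> C)"

definition good_triangulation ::
  "(real^('v::finite + 'e::finite) \<Rightarrow> real) \<Rightarrow> 'v set \<Rightarrow> 'e set \<Rightarrow> ('e \<Rightarrow> 'v \<times> 'v) \<Rightarrow> bool" where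
  "good_triangulation \<psi> V E ends \<longleftrightarrow>
     induces_triangulation \<psi> (cosmo_points V E ends) \<and>
     (\<forall>a\<in>cosmo_points V E ends. reg_cell \<psi> (cosmo_points V E ends) {a}) \<and>
     reg_cell \<psi> (cosmo_points V E ends) (std_simplex V E) \<and>
     (\<forall>C. reg_cell \<psi> (cosmo_points V E ends) C \<longrightarrow> std_simplex V E \<subseteq> C \<longrightarrow> C = std_simplex V E)"

end

theory Submission
  imports Defs
begin

lemma cell_restrict:
  assumes "tri_simplex \<psi> A T" "A' \<subseteq> A" "S \<subseteq> A'" "S \<subseteq> T"
  shows "tri_simplex \<psi> A' S"
proof -
  from assms(1) obtain C w b where c: "\<forall>a\<in>A. w \<bullet> a + b \<le> \<psi> a" "C = {a\<in>A. w \<bullet> a + b = \<psi> a}" "T \<subseteq> C"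
    unfolding tri_simplex_def reg_cell_def by blast
  show ?thesis unfolding tri_simplex_def reg_cell_def
    apply (rule exI[of _ "{a\<in>A'. w \<bullet> a + b = \<psi> a}"])
    using c assms(2-4) by blast
qed

theorem mainTheorem1:
  fixes V :: "'v::finite set" and E :: "'e::finite set" and ends :: "'e \<Rightarrow> 'v \<times> 'v"
    and f :: 'e and \<psi> :: "real^('v + 'e) \<Rightarrow> real" and S :: "(real^('v + 'e)) set"
  assumes "multigraph V E ends"
    and "f \<in> E"
    and "good_triangulation \<psi> V E ends"
    and "S \<subseteq> cosmo_points V (E - {f}) ends"
  shows "(tri_simplex \<psi> (cosmo_points V (E - {f}) ends) S
            \<longleftrightarrow> tri_simplex \<psi> (cosmo_points V E ends) (S \<union> {et ends f}))
       \<and> (tri_simplex \<psi> (cosmo_points V (E - {f}) ends) S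
            \<longleftrightarrow> (tri_simplex \<psi> (cosmo_points V E ends) (S \<union> {ee f})
                \<or> tri_simplex \<psi> (cosmo_points V E ends) (S \<union> {er ends f})
                \<or> tri_simplex \<psi> (cosmo_points V E ends) (S \<union> {el ends f})))"
proof -
  define A where "A = cosmo_points V E ends"
  define A' where "A' = cosmo_points V (E - {f}) ends"
  define u where "u = fst (ends f)"
  define v where "v = snd (ends f)"
  define d :: "real^('v+'e)" where "d = ee f"
  define pt :: "real^('v+'e)" where "pt = et ends f"
  have uv: "u \<in> V" "v \<in> V" using assms(1,2) unfolding multigraph_def u_def v_def by auto
  have AA: "A = A' \<union> {ee f, et ends f, el ends f, er ends f}"
  proof -
    have "E = insert f (E - {f})" using assms(2) by blast
    then show ?thesis unfolding A_def A'_def cosmo_points_def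
      using assms(2) by (auto simp: image_iff)
  qed
  have A'A: "A' \<subseteq> A" using AA by blast
  have evA': "ev ` V \<subseteq> A'" unfolding A'_def cosmo_points_def by blast
  obtain w0 b0 where h0: "\<forall>a\<in>A. w0 \<bullet> a + b0 \<le> \<psi> a"
    and std: "std_simplex V E = {a\<in>A. w0 \<bullet> a + b0 = \<psi> a}"
  proof -
    have "reg_cell \<psi> A (std_simplex V E)"
      using assms(3)[unfolded good_triangulation_def, THEN conjunct2, THEN conjunct2, THEN conjunct1]
      unfolding A_def .
    then obtain w b where "\<forall>a\<in>A. w \<bullet> a + b \<le> \<psi> a" "std_simplex V E = {a\<in>A. w \<bullet> a + b = \<psi> a}"
      unfolding reg_cell_def by blast
    then show ?thesis using that by blast
  qed
  have pA: "ee f \<in> A" "pt \<in> A" "el ends f \<in> A" "er ends f \<in> A" using AA pt_def by auto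
  have key: "w \<bullet> p + b + (w \<bullet> pt + b) \<le> \<psi> p + \<psi> pt"
    if hw: "\<forall>a\<in>A'. w \<bullet> a + b \<le> \<psi> a" and p: "p \<in> A" and q: "q1 \<in> ev ` V" "q2 \<in> ev ` V"
      and eq: "p + pt = q1 + q2" for w b p q1 q2
  proof -
    have qs: "q1 \<in> std_simplex V E" "q2 \<in> std_simplex V E" using q unfolding std_simplex_def by auto
    have q0: "w0 \<bullet> q1 + b0 = \<psi> q1" "w0 \<bullet> q2 + b0 = \<psi> q2" using qs std by auto
    have e1: "w \<bullet> p + w \<bullet> pt = w \<bullet> q1 + w \<bullet> q2" by (metis eq inner_add_right)
    have e2: "w0 \<bullet> p + w0 \<bullet> pt = w0 \<bullet> q1 + w0 \<bullet> q2" by (metis eq inner_add_right)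
    have "w \<bullet> q1 + b \<le> \<psi> q1" "w \<bullet> q2 + b \<le> \<psi> q2" using hw q evA' by auto
    moreover have "w0 \<bullet> p + b0 \<le> \<psi> p" "w0 \<bullet> pt + b0 \<le> \<psi> pt" using h0 p pA by auto
    ultimately show ?thesis using e1 e2 q0 by linarith
  qed
  have id1: "ee f + pt = ev u + ev v"
    unfolding pt_def et_def u_def v_def by simp
  have id2: "el ends f + pt = ev u + ev u"
    unfolding pt_def et_def el_def u_def v_def by (simp add: algebra_simps)
  have id3: "er ends f + pt = ev v + ev v"
    unfolding pt_def et_def er_def u_def v_def by (simp add: algebra_simps)
  have keyall: "w \<bullet> p + b + (w \<bullet> pt + b) \<le> \<psi> p + \<psi> pt"
    if hw: "\<forall>a\<in>A'. w \<bullet> a + b \<le> \<psi> a" and p: "p \<in> {ee f, el ends f, er ends f}" for w b p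
    using p key[OF hw pA(1) _ _ id1] key[OF hw pA(3) _ _ id2] key[OF hw pA(4) _ _ id3] uv by auto
  have d0: "d \<bullet> a = 0" if "a \<in> A'" for a
    using that unfolding A'_def cosmo_points_def d_def
    by (auto simp: ev_def ee_def et_def el_def er_def inner_add_right inner_diff_right inner_axis_axis split: if_splits)
  have d1: "d \<bullet> ee f = 1" "d \<bullet> el ends f = 1" "d \<bullet> er ends f = 1" "d \<bullet> pt = -1"
    unfolding d_def pt_def
    by (auto simp: ev_def ee_def et_def el_def er_def inner_add_right inner_diff_right inner_axis_axis)
  have fwd2: "tri_simplex \<psi> A (S \<union> {pt})" if "tri_simplex \<psi> A' S"
  proof -
    from that obtain C w b where c: "\<forall>a\<in>A'. w \<bullet> a + b \<le> \<psi> a" "C = {a\<in>A'. w \<bullet> a + b = \<psi> a}" "S \<subseteq> C"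
      unfolding tri_simplex_def reg_cell_def by blast
    define t where "t = w \<bullet> pt + b - \<psi> pt"
    define w2 where "w2 = w + t *\<^sub>R d"
    have w2a: "w2 \<bullet> a = w \<bullet> a + t * (d \<bullet> a)" for a unfolding w2_def by (simp add: inner_add_left)
    have le: "\<forall>a\<in>A. w2 \<bullet> a + b \<le> \<psi> a"
    proof
      fix a assume "a \<in> A"
      then consider "a \<in> A'" | "a \<in> {ee f, el ends f, er ends f}" | "a = pt" using AA pt_def by auto
      then show "w2 \<bullet> a + b \<le> \<psi> a"
      proof cases
        case 1 then show ?thesis using c d0 w2a by simp
      next
        case 2 then show ?thesis using keyall[OF c(1) 2] d1 w2a[of a] unfolding t_def by auto
      next
        case 3 then show ?thesis using d1 w2a[of a] unfolding t_def by auto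
      qed
    qed
    have "x \<in> {a\<in>A. w2 \<bullet> a + b = \<psi> a}" if "x \<in> S" for x
    proof -
      have "x \<in> A'" "w \<bullet> x + b = \<psi> x" using that c by blast+
      then show ?thesis using d0[of x] w2a[of x] A'A by auto
    qed
    moreover have "pt \<in> {a\<in>A. w2 \<bullet> a + b = \<psi> a}"
      using pA d1 w2a[of pt] unfolding t_def by auto
    ultimately have sub: "S \<union> {pt} \<subseteq> {a\<in>A. w2 \<bullet> a + b = \<psi> a}" by blast
    show ?thesis unfolding tri_simplex_def reg_cell_def
      apply (rule exI[of _ "{a\<in>A. w2 \<bullet> a + b = \<psi> a}"])
      using le sub by blast
  qed
  have fwd3: "\<exists>p\<in>{ee f, el ends f, er ends f}. tri_simplex \<psi> A (S \<union> {p})" if "tri_simplex \<psi> A' S"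
  proof -
    from that obtain C w b where c: "\<forall>a\<in>A'. w \<bullet> a + b \<le> \<psi> a" "C = {a\<in>A'. w \<bullet> a + b = \<psi> a}" "S \<subseteq> C"
      unfolding tri_simplex_def reg_cell_def by blast
    define P where "P = {ee f, el ends f, er ends f}"
    define g where "g = (\<lambda>q. \<psi> q - (w \<bullet> q + b))"
    obtain p where pP: "p \<in> P" and pm: "g p = Min (g ` P)"
      using Min_in[of "g ` P"] unfolding P_def by fastforce
    have pmin: "g p \<le> g q" if "q \<in> P" for q
    proof -
      have "finite (g ` P)" unfolding P_def by simp
      then have "Min (g ` P) \<le> g q" using that by (intro Min_le) auto
      then show ?thesis using pm by simp
    qed
    define t where "t = g p"
    define w2 where "w2 = w + t *\<^sub>R d"
    have w2a: "w2 \<bullet> a = w \<bullet> a + t * (d \<bullet> a)" for a unfolding w2_def by (simp add: inner_add_left)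
    have dP: "d \<bullet> q = 1" if "q \<in> P" for q using that d1 unfolding P_def by auto
    have le: "\<forall>a\<in>A. w2 \<bullet> a + b \<le> \<psi> a"
    proof
      fix a assume "a \<in> A"
      then consider "a \<in> A'" | "a \<in> P" | "a = pt" using AA pt_def P_def by auto
      then show "w2 \<bullet> a + b \<le> \<psi> a"
      proof cases
        case 1 then show ?thesis using c d0 w2a by simp
      next
        case 2 then show ?thesis using pmin[OF 2] dP[OF 2] w2a[of a] unfolding t_def g_def by auto
      next
        case 3 then show ?thesis using keyall[OF c(1), of p] pP d1 w2a[of a] unfolding t_def g_def P_def by auto
      qed
    qed
    have "p \<in> A" using pP pA unfolding P_def by auto
    then have "p \<in> {a\<in>A. w2 \<bullet> a + b = \<psi> a}"
      using dP[OF pP] w2a[of p] unfolding t_def g_def by auto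
    moreover have "x \<in> {a\<in>A. w2 \<bullet> a + b = \<psi> a}" if "x \<in> S" for x
    proof -
      have "x \<in> A'" "w \<bullet> x + b = \<psi> x" using that c by blast+
      then show ?thesis using d0[of x] w2a[of x] A'A by auto
    qed
    ultimately have sub: "S \<union> {p} \<subseteq> {a\<in>A. w2 \<bullet> a + b = \<psi> a}" by blast
    have "tri_simplex \<psi> A (S \<union> {p})" unfolding tri_simplex_def reg_cell_def
      apply (rule exI[of _ "{a\<in>A. w2 \<bullet> a + b = \<psi> a}"])
      using le sub by blast
    then show ?thesis using pP unfolding P_def by blast
  qed
  have bwd: "tri_simplex \<psi> A' S" if "tri_simplex \<psi> A (S \<union> {x})" for x
    using cell_restrict[OF that A'A] assms(4) unfolding A'_def by blast
  show ?thesis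
    using fwd2 fwd3 bwd unfolding A_def[symmetric] A'_def[symmetric] pt_def[symmetric]
    by blast
qed

end
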